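(* If $r\ge 2$, then the glued binary tree $GT(r)$ satisfies $\mu_{\rm o}(GT(r))=2^r$, and $GT(r)$ has exactly one $\mu_{\rm o}$-set.
   Context: A perfect binary tree of depth $r\ge1$ is a rooted tree in which every non-leaf vertex has exactly $2$ children and all leaves have depth $r$. The glued binary tree $GT(r)$ is obtained from two copies of the perfect binary tree of depth $r$ by pairwise identifying their leaves (via a fixed isomorphism of the copies). For $S\subseteq V(G)$, two vertices $u,v$ are $S$-visible if there exists a shortest $u,v$-path $P$ with $V(P)\cap S\subseteq\{u,v\}$; $S$ is a mutual-visibility set if every two vertices of $S$ are $S$-visible. $S$ is an outer mutual-visibility set if it is a mutual-visibility set and every pair $u\in S$, $v\in V(G)\setminus S$ is $S$-visible. A largest outer mutual-visibility set is a $\mu_{\rm o}$-set, and its size is the outer mutual-visibility number $\mu_{\rm o}(G)$. *)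

theory Defs
  imports Main
begin

definition walk :: "'a set \<Rightarrow> ('a \<Rightarrow> 'a \<Rightarrow> bool) \<Rightarrow> 'a list \<Rightarrow> bool" where
  "walk V E p \<longleftrightarrow> p \<noteq> [] \<and> set p \<subseteq> V \<and> (\<forall>i. Suc i < length p \<longrightarrow> E (p ! i) (p ! Suc i))"

definition dist :: "'a set \<Rightarrow> ('a \<Rightarrow> 'a \<Rightarrow> bool) \<Rightarrow> 'a \<Rightarrow> 'a \<Rightarrow> nat" where
  "dist V E u v = (LEAST n. \<exists>p. walk V E p \<and> hd p = u \<and> last p = v \<and> length p = Suc n)"

text \<open>A shortest u,v-path (as vertex list); minimality forces it to be a path.\<close>
definition shortest_path :: "'a set \<Rightarrow> ('a \<Rightarrow> 'a \<Rightarrow> bool) \<Rightarrow> 'a \<Rightarrow> 'a \<Rightarrow> 'a list \<Rightarrow> bool" where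
  "shortest_path V E u v p \<longleftrightarrow> walk V E p \<and> hd p = u \<and> last p = v \<and> length p = Suc (dist V E u v)"

definition S_visible :: "'a set \<Rightarrow> ('a \<Rightarrow> 'a \<Rightarrow> bool) \<Rightarrow> 'a set \<Rightarrow> 'a \<Rightarrow> 'a \<Rightarrow> bool" where
  "S_visible V E S u v \<longleftrightarrow> (\<exists>p. shortest_path V E u v p \<and> set p \<inter> S \<subseteq> {u, v})"

definition mutual_visibility_set :: "'a set \<Rightarrow> ('a \<Rightarrow> 'a \<Rightarrow> bool) \<Rightarrow> 'a set \<Rightarrow> bool" where
  "mutual_visibility_set V E S \<longleftrightarrow> S \<subseteq> V \<and> (\<forall>u\<in>S. \<forall>v\<in>S. S_visible V E S u v)"

definition outer_mutual_visibility_set :: "'a set \<Rightarrow> ('a \<Rightarrow> 'a \<Rightarrow> bool) \<Rightarrow> 'a set \<Rightarrow> bool" where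
  "outer_mutual_visibility_set V E S \<longleftrightarrow> mutual_visibility_set V E S \<and>
     (\<forall>u\<in>S. \<forall>v\<in>V - S. S_visible V E S u v)"

definition outer_mv_number :: "'a set \<Rightarrow> ('a \<Rightarrow> 'a \<Rightarrow> bool) \<Rightarrow> nat" where
  "outer_mv_number V E = Max (card ` {S. outer_mutual_visibility_set V E S})"

definition mu_o_set :: "'a set \<Rightarrow> ('a \<Rightarrow> 'a \<Rightarrow> bool) \<Rightarrow> 'a set \<Rightarrow> bool" where
  "mu_o_set V E S \<longleftrightarrow> outer_mutual_visibility_set V E S \<and> card S = outer_mv_number V E"

text \<open>A vertex of a perfect binary tree of depth r is a bit list of length \<le> r
  (its path from the root; the root is []); the parent of xs is butlast xs.
  In GT(r) a vertex is (copy, xs). Internal vertices (length xs < r) exist in both copies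
  (copy = False / True); leaves (length xs = r) are identified and represented with copy = False.\<close>
definition GT_V :: "nat \<Rightarrow> (bool \<times> bool list) set" where
  "GT_V r = {(c, xs). length xs < r} \<union> {(c, xs). c = False \<and> length xs = r}"

definition tree_edge :: "bool list \<Rightarrow> bool list \<Rightarrow> bool" where
  "tree_edge xs ys \<longleftrightarrow> (length ys = Suc (length xs) \<and> butlast ys = xs)
                      \<or> (length xs = Suc (length ys) \<and> butlast xs = ys)"

definition GT_E :: "nat \<Rightarrow> bool \<times> bool list \<Rightarrow> bool \<times> bool list \<Rightarrow> bool" where
  "GT_E r u v \<longleftrightarrow> u \<in> GT_V r \<and> v \<in> GT_V r \<and> tree_edge (snd u) (snd v) \<and>
     (fst u = fst v \<or> length (snd u) = r \<or> length (snd v) = r)"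

end

theory Submission
  imports Defs "HOL-Library.Sublist"
begin

lemma walk_single[simp]: "walk V E [x] \<longleftrightarrow> x \<in> V"
  by (auto simp: walk_def)

lemma walk_Cons2:
  assumes "q \<noteq> []"
  shows "walk V E (x # q) \<longleftrightarrow> x \<in> V \<and> E x (hd q) \<and> walk V E q"
proof
  assume w: "walk V E (x # q)"
  have "E ((x#q) ! 0) ((x#q) ! Suc 0)" using w assms unfolding walk_def by auto
  then have "E x (hd q)" using assms by (simp add: hd_conv_nth)
  moreover have "walk V E q" unfolding walk_def
  proof (intro conjI allI impI)
    fix i assume "Suc i < length q"
    then have "E ((x#q) ! Suc i) ((x#q) ! Suc (Suc i))" using w unfolding walk_def by auto
    then show "E (q ! i) (q ! Suc i)" by simp
  qed (use w assms in \<open>auto simp: walk_def\<close>)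
  ultimately show "x \<in> V \<and> E x (hd q) \<and> walk V E q" using w by (auto simp: walk_def)
next
  assume "x \<in> V \<and> E x (hd q) \<and> walk V E q"
  then show "walk V E (x # q)" using assms unfolding walk_def
    by (auto simp: hd_conv_nth nth_Cons split: nat.splits)
qed

lemma walk_append:
  assumes "p \<noteq> []" "q \<noteq> []"
  shows "walk V E (p @ q) \<longleftrightarrow> walk V E p \<and> walk V E q \<and> E (last p) (hd q)"
  using assms
proof (induction p)
  case Nil then show ?case by simp
next
  case (Cons x p)
  show ?case
  proof (cases "p = []")
    case True
    then show ?thesis using Cons.prems walk_Cons2[of q V E x] by auto
  next
    case False
    then show ?thesis using Cons walk_Cons2[of "p @ q" V E x] walk_Cons2[of p V E x] by auto
  qed
qed

lemma walk_rev:
  assumes "\<And>a b. E a b \<Longrightarrow> E b a"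
  shows "walk V E p \<Longrightarrow> walk V E (rev p)"
proof (induction p)
  case Nil then show ?case by (simp add: walk_def)
next
  case (Cons x p)
  show ?case
  proof (cases "p = []")
    case True then show ?thesis using Cons by simp
  next
    case False
    then have "walk V E p" "x \<in> V" "E x (hd p)" using Cons.prems walk_Cons2[of p V E x] by auto
    then show ?thesis using Cons.IH False walk_append[of "rev p" "[x]" V E] assms
      by (simp add: last_rev)
  qed
qed

lemma walk_edge: "walk V E p \<Longrightarrow> Suc i < length p \<Longrightarrow> E (p ! i) (p ! Suc i)"
  by (simp add: walk_def)

lemma walk_in: "walk V E p \<Longrightarrow> i < length p \<Longrightarrow> p ! i \<in> V"
  by (auto simp: walk_def)

lemma dist_le:
  assumes "walk V E p" "hd p = u" "last p = v"
  shows "dist V E u v \<le> length p - 1"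
proof -
  have "p \<noteq> []" using assms by (simp add: walk_def)
  then have "length p = Suc (length p - 1)" by simp
  then show ?thesis unfolding dist_def using assms by (intro Least_le) blast
qed

lemma dist_eq:
  assumes "walk V E p" "hd p = u" "last p = v" "length p = Suc m"
    and "\<And>q. walk V E q \<Longrightarrow> hd q = u \<Longrightarrow> last q = v \<Longrightarrow> Suc m \<le> length q"
  shows "dist V E u v = m"
  unfolding dist_def
proof (rule Least_equality)
  show "\<exists>p. walk V E p \<and> hd p = u \<and> last p = v \<and> length p = Suc m" using assms by blast
next
  fix n assume "\<exists>p. walk V E p \<and> hd p = u \<and> last p = v \<and> length p = Suc n"
  then show "m \<le> n" using assms(5) by fastforce
qed

lemma visible_short:
  assumes "S_visible V E S u v" "walk V E q" "hd q = u" "last q = v"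
  obtains p where "walk V E p" "hd p = u" "last p = v" "length p \<le> length q" "set p \<inter> S \<subseteq> {u, v}"
proof -
  obtain p where p: "shortest_path V E u v p" "set p \<inter> S \<subseteq> {u, v}" using assms(1) S_visible_def by metis
  have "dist V E u v \<le> length q - 1" using dist_le assms by metis
  moreover have "0 < length q" using assms by (simp add: walk_def)
  moreover have "length p = Suc (dist V E u v)" using p(1) unfolding shortest_path_def by auto
  ultimately have "length p \<le> length q" by linarith
  then show ?thesis using that p unfolding shortest_path_def by blast
qed



lemma GT_V_iff[simp]: "(c, xs) \<in> GT_V r \<longleftrightarrow> length xs < r \<or> (c = False \<and> length xs = r)"
  by (auto simp: GT_V_def)

lemma GT_V_len: "u \<in> GT_V r \<Longrightarrow> length (snd u) \<le> r"
  by (cases u) auto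

lemma GT_E_sym: "GT_E r a b \<Longrightarrow> GT_E r b a"
  by (auto simp: GT_E_def tree_edge_def)

lemma GT_E_step: "GT_E r u v \<Longrightarrow>
   (length (snd v) = Suc (length (snd u)) \<and> butlast (snd v) = snd u) \<or>
   (length (snd u) = Suc (length (snd v)) \<and> butlast (snd u) = snd v)"
  by (auto simp: GT_E_def tree_edge_def)

lemma GT_E_copy: "GT_E r u v \<Longrightarrow> length (snd u) < r \<Longrightarrow> length (snd v) < r \<Longrightarrow> fst u = fst v"
  by (auto simp: GT_E_def)

lemma GT_E_up:
  assumes "(c', ys) \<in> GT_V r" "ys \<noteq> []" "c' = c \<or> length ys = r"
  shows "GT_E r (c', ys) (c, butlast ys)"
proof -
  have "length ys \<le> r" "length ys > 0" using assms(1,2) by auto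
  moreover have "length (butlast ys) = length ys - 1" by simp
  ultimately have "length (butlast ys) < r" by linarith
  then have "(c, butlast ys) \<in> GT_V r" by auto
  then show ?thesis using assms \<open>length ys > 0\<close> \<open>length ys \<le> r\<close> unfolding GT_E_def tree_edge_def by auto
qed

lemma len_lip:
  assumes "walk (GT_V r) (GT_E r) p" "i \<le> j" "j < length p"
  shows "length (snd (p!j)) \<le> length (snd (p!i)) + (j - i) \<and>
         length (snd (p!i)) \<le> length (snd (p!j)) + (j - i)"
  using assms(2,3)
proof (induction j)
  case 0 then show ?case by simp
next
  case (Suc j)
  show ?case
  proof (cases "i = Suc j")
    case True then show ?thesis by simp
  next
    case False
    then have "i \<le> j" using Suc.prems by simp
    then have IH: "length (snd (p!j)) \<le> length (snd (p!i)) + (j - i) \<and>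
         length (snd (p!i)) \<le> length (snd (p!j)) + (j - i)" using Suc by simp
    have "GT_E r (p!j) (p!Suc j)" using walk_edge assms(1) Suc.prems by metis
    from GT_E_step[OF this] IH \<open>i \<le> j\<close> show ?thesis by auto
  qed
qed

lemma first_change: "P (0::nat) \<Longrightarrow> \<not> P n \<Longrightarrow> \<exists>k<n. P k \<and> \<not> P (Suc k)"
proof (induction n)
  case 0 then show ?case by simp
next
  case (Suc n)
  show ?case
  proof (cases "P n")
    case True then show ?thesis using Suc.prems by blast
  next
    case False then show ?thesis using Suc by (meson less_SucI)
  qed
qed

lemma prefix_butlast_eq: "prefix w a \<Longrightarrow> \<not> prefix w (butlast a) \<Longrightarrow> a = w"
proof -
  assume "prefix w a" "\<not> prefix w (butlast a)"
  then obtain zs where a: "a = w @ zs" by (auto simp: prefix_def)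
  show "a = w"
  proof (cases "zs = []")
    case True then show ?thesis using a by simp
  next
    case False
    then have "butlast a = w @ butlast zs" using a by (simp add: butlast_append)
    then show ?thesis using \<open>\<not> prefix w (butlast a)\<close> by simp
  qed
qed

lemma walk_exit:
  assumes "walk (GT_V r) (GT_E r) p" "prefix w (snd (p!0))" "\<not> prefix w (snd (p!(length p - 1)))"
  shows "\<exists>k. Suc k < length p \<and> snd (p!k) = w \<and> snd (p!Suc k) = butlast w"
proof -
  obtain k where k: "k < length p - 1" "prefix w (snd (p!k))" "\<not> prefix w (snd (p!Suc k))"
    using first_change[of "\<lambda>i. prefix w (snd (p!i))", OF assms(2,3)] by blast
  then have "Suc k < length p" by linarith
  then have e: "GT_E r (p!k) (p!Suc k)" using walk_edge assms(1) by metis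
  have "snd (p!k) = w \<and> snd (p!Suc k) = butlast w"
    using GT_E_step[OF e]
  proof
    assume "length (snd (p!Suc k)) = Suc (length (snd (p!k))) \<and> butlast (snd (p!Suc k)) = snd (p!k)"
    then have "prefix (snd (p!k)) (snd (p!Suc k))"
      by (metis append_butlast_last_id length_greater_0_conv prefixI zero_less_Suc)
    then show ?thesis using k prefix_order.trans by blast
  next
    assume h: "length (snd (p!k)) = Suc (length (snd (p!Suc k))) \<and> butlast (snd (p!k)) = snd (p!Suc k)"
    then have "snd (p!k) = w" using prefix_butlast_eq k by metis
    then show ?thesis using h by simp
  qed
  then show ?thesis using k by (intro exI[of _ k]) auto
qed

lemma walk_ascent:
  assumes "walk (GT_V r) (GT_E r) p" "k \<le> j" "j < length p"
    "length (snd (p!k)) = length (snd (p!j)) + (j - k)"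
  shows "k \<le> i \<Longrightarrow> i \<le> j \<Longrightarrow> snd (p!i) = take (length (snd (p!k)) - (i - k)) (snd (p!k))"
proof (induction i)
  case 0 then show ?case by simp
next
  case (Suc i)
  show ?case
  proof (cases "k = Suc i")
    case True then show ?thesis by simp
  next
    case False
    then have ki: "k \<le> i" using Suc.prems by simp
    have IH: "snd (p!i) = take (length (snd (p!k)) - (i - k)) (snd (p!k))" using Suc ki by simp
    have lenI: "length (snd (p!i)) = length (snd (p!k)) - (i - k)" using IH by simp
    have "length (snd (p!Suc i)) \<le> length (snd (p!j)) + (j - Suc i)"
      using len_lip[OF assms(1), of "Suc i" j] Suc.prems assms by simp
    then have lt: "length (snd (p!Suc i)) < length (snd (p!i))" using lenI assms(4) Suc.prems ki by linarith
    have "GT_E r (p!i) (p!Suc i)" using walk_edge assms Suc.prems by (metis le_less_trans)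
    from GT_E_step[OF this] lt have "snd (p!Suc i) = butlast (snd (p!i))" by auto
    also have "\<dots> = take (length (snd (p!k)) - (i - k) - 1) (snd (p!k))"
      using IH by (simp add: butlast_take)
    also have "length (snd (p!k)) - (i - k) - 1 = length (snd (p!k)) - (Suc i - k)"
      using ki by simp
    finally show ?thesis .
  qed
qed

lemma walk_copy_const:
  assumes "walk (GT_V r) (GT_E r) p" "\<And>m. a \<le> m \<Longrightarrow> m < length p \<Longrightarrow> length (snd (p!m)) < r"
  shows "a \<le> i \<Longrightarrow> i < length p \<Longrightarrow> fst (p!i) = fst (p!a)"
proof (induction i)
  case 0 then show ?case by simp
next
  case (Suc i)
  show ?case
  proof (cases "a = Suc i")
    case True then show ?thesis by simp
  next
    case False
    then have ai: "a \<le> i" using Suc.prems by simp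
    have "GT_E r (p!i) (p!Suc i)" using walk_edge assms Suc.prems by metis
    then have "fst (p!i) = fst (p!Suc i)" using GT_E_copy assms(2) ai Suc.prems by (meson Suc_lessD le_SucI)
    then show ?thesis using Suc ai by simp
  qed
qed

lemma up_walk:
  assumes "(c', ys) \<in> GT_V r" "c' = c \<or> length ys = r"
  shows "j < length ys \<Longrightarrow> \<exists>p. walk (GT_V r) (GT_E r) p \<and> hd p = (c', ys) \<and> last p = (c, take j ys)
     \<and> length p = Suc (length ys - j) \<and> (\<forall>u\<in>set (tl p). fst u = c \<and> length (snd u) < length ys)"
proof (induction "length ys - Suc j" arbitrary: j)
  case 0
  then have j: "j = length ys - 1" by simp
  have ne: "ys \<noteq> []" using 0 by auto
  have e: "GT_E r (c', ys) (c, butlast ys)" using GT_E_up assms ne by blast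
  then have "(c, butlast ys) \<in> GT_V r" by (simp add: GT_E_def)
  then have "walk (GT_V r) (GT_E r) [(c', ys), (c, butlast ys)]" using walk_Cons2[of "[(c, butlast ys)]" "GT_V r" "GT_E r" "(c', ys)"] e assms(1) by simp
  moreover have "length ys - j = 1" using j ne by (cases ys) auto
  ultimately show ?case using j ne by (intro exI[of _ "[(c', ys), (c, butlast ys)]"]) (auto simp: butlast_conv_take)
next
  case (Suc d)
  have d: "d = length ys - Suc (Suc j)" "Suc j < length ys" using Suc.hyps(2) Suc.prems by auto
  then obtain p where p: "walk (GT_V r) (GT_E r) p" "hd p = (c', ys)" "last p = (c, take (Suc j) ys)"
     "length p = Suc (length ys - Suc j)" "\<forall>u\<in>set (tl p). fst u = c \<and> length (snd u) < length ys"
    using Suc.hyps(1)[of "Suc j"] by blast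
  have lr: "length ys \<le> r" using assms(1) by auto
  have vj: "(c, take j ys) \<in> GT_V r" using \<open>Suc j < length ys\<close> lr by simp
  have e: "GT_E r (c, take (Suc j) ys) (c, take j ys)"
    using \<open>Suc j < length ys\<close> lr vj unfolding GT_E_def tree_edge_def by (auto simp: butlast_take)
  have pne: "p \<noteq> []" using p(1) by (simp add: walk_def)
  have w: "walk (GT_V r) (GT_E r) (p @ [(c, take j ys)])"
    using walk_append[of p "[(c, take j ys)]"] pne p e vj by simp
  have "set (tl (p @ [(c, take j ys)])) \<subseteq> set (tl p) \<union> {(c, take j ys)}"
    using pne by (cases p) auto
  then have "\<forall>u\<in>set (tl (p @ [(c, take j ys)])). fst u = c \<and> length (snd u) < length ys"
    using p(5) \<open>Suc j < length ys\<close> by auto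
  moreover have "length (p @ [(c, take j ys)]) = Suc (length ys - j)" using p(4) d(2) by simp
  moreover have "hd (p @ [(c, take j ys)]) = (c', ys)" using p(2) pne by simp
  moreover have "last (p @ [(c, take j ys)]) = (c, take j ys)" by simp
  ultimately show ?case using w by blast
qed


abbreviation "omv r S \<equiv> outer_mutual_visibility_set (GT_V r) (GT_E r) S"

lemma omv_vis: "omv r S \<Longrightarrow> u \<in> S \<Longrightarrow> v \<in> GT_V r \<Longrightarrow> S_visible (GT_V r) (GT_E r) S u v"
  unfolding outer_mutual_visibility_set_def mutual_visibility_set_def by blast

lemma omv_sub: "omv r S \<Longrightarrow> S \<subseteq> GT_V r"
  unfolding outer_mutual_visibility_set_def mutual_visibility_set_def by blast

lemma walk_hd_nth: "walk V E p \<Longrightarrow> hd p = p ! 0"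
  by (simp add: walk_def hd_conv_nth)

lemma walk_last_nth: "walk V E p \<Longrightarrow> last p = p ! (length p - 1)"
  by (simp add: walk_def last_conv_nth)

definition zsel :: "bool list \<Rightarrow> bool list \<Rightarrow> bool list" where
  "zsel xs ys = (if xs = [] then [\<not> hd ys] else butlast xs)"

lemma block_core:
  assumes w: "walk (GT_V r) (GT_E r) p" and h: "snd (hd p) = ys" and l: "last p = (c, zsel xs ys)"
    and sp: "strict_prefix xs ys" and xr: "length xs < r" and zr: "length (zsel xs ys) < r"
    and len: "length p \<le> length ys - length xs + 2"
  shows "(c, xs) \<in> set p"
proof -
  define zs where "zs = zsel xs ys"
  define w0 where "w0 = (if xs = [] then [hd ys] else xs)"
  have ysne: "ys \<noteq> []" using sp by auto
  have pw: "prefix w0 ys" using sp ysne unfolding w0_def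
    by (cases ys) (auto simp: strict_prefix_def)
  have p0: "snd (p!0) = ys" using h walk_hd_nth[OF w] by simp
  have pL: "p ! (length p - 1) = (c, zs)" using l walk_last_nth[OF w] zs_def by simp
  have npw: "\<not> prefix w0 zs"
  proof (cases "xs = []")
    case True then show ?thesis unfolding w0_def zs_def zsel_def by simp
  next
    case False
    then have "length (butlast xs) < length xs" by simp
    moreover have "w0 = xs" "zs = butlast xs" unfolding w0_def zs_def zsel_def using False by simp_all
    ultimately show ?thesis using prefix_length_le by (metis leD)
  qed
  obtain k where k: "Suc k < length p" "snd (p!k) = w0" "snd (p!Suc k) = butlast w0"
    using walk_exit[OF w, of w0] pw npw p0 pL by auto
  have "length (snd (p!0)) \<le> length (snd (p!k)) + k" using len_lip[OF w, of 0 k] k by simp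
  then have kge: "length ys \<le> length w0 + k" using p0 k by simp
  have lxy: "length xs < length ys" using sp prefix_length_less by blast
  show ?thesis
  proof (cases "xs = []")
    case False
    then have bw: "butlast w0 = zs" unfolding w0_def zs_def zsel_def by simp
    have "length w0 = length xs" using False w0_def by simp
    then have "Suc k = length p - 1" using kge len k(1) lxy by linarith
    then have e: "GT_E r (p!k) (c, zs)" using walk_edge[OF w, of k] pL k(1) by simp
    have "fst (p!k) = c" using GT_E_copy[OF e] k(2) w0_def False xr zr zs_def by simp
    then have "p!k = (c, xs)" using k(2) w0_def False by (simp add: prod_eq_iff)
    then show ?thesis using k(1) by (metis Suc_lessD nth_mem)
  next
    case True
    then have bw: "butlast w0 = []" unfolding w0_def by simp
    have zsne: "zs \<noteq> []" using True unfolding zs_def zsel_def by simp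
    have "Suc k \<noteq> length p - 1" using pL k(3) bw zsne by (metis snd_conv)
    then have "Suc (Suc k) = length p - 1" using kge len k(1) True w0_def by simp
    then have e: "GT_E r (p!Suc k) (c, zs)" using walk_edge[OF w, of "Suc k"] pL k(1) by simp
    have "fst (p!Suc k) = c" using GT_E_copy[OF e] k(3) bw True xr zr zs_def by simp
    then have "p!Suc k = (c, xs)" using k(3) bw True by (simp add: prod_eq_iff)
    then show ?thesis using k(1) by (metis nth_mem)
  qed
qed

lemma below_not_in:
  assumes r2: "2 \<le> r" and S: "omv r S" and xS: "(c, xs) \<in> S" and xr: "length xs < r"
    and vV: "(c', ys) \<in> GT_V r" and sp: "strict_prefix xs ys" and cc: "c' = c \<or> length ys = r"
  shows "(c', ys) \<notin> S"
proof
  assume vS: "(c', ys) \<in> S"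
  define zs where "zs = zsel xs ys"
  have ysne: "ys \<noteq> []" using sp by auto
  have lxy: "length xs < length ys" using sp prefix_length_less by blast
  have zr: "length zs < r" using r2 xr unfolding zs_def zsel_def by auto
  then have zV: "(c, zs) \<in> GT_V r" by simp
  have txs: "take (length xs) ys = xs" using sp by (auto simp: strict_prefix_def prefix_def)
  obtain p0 where p0: "walk (GT_V r) (GT_E r) p0" "hd p0 = (c', ys)" "last p0 = (c, take (length xs) ys)"
     "length p0 = Suc (length ys - length xs)"
    using up_walk[OF vV cc lxy] by blast
  have e: "GT_E r (c, xs) (c, zs)"
  proof (cases "xs = []")
    case True
    then show ?thesis using zV xr unfolding zs_def zsel_def GT_E_def tree_edge_def by simp
  next
    case False
    then show ?thesis using zV xr unfolding zs_def zsel_def GT_E_def tree_edge_def by simp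
  qed
  have p0ne: "p0 \<noteq> []" using p0(1) by (simp add: walk_def)
  have wq: "walk (GT_V r) (GT_E r) (p0 @ [(c, zs)])"
    using walk_append[of p0 "[(c, zs)]"] p0ne p0 e zV txs by simp
  obtain p where p: "walk (GT_V r) (GT_E r) p" "hd p = (c', ys)" "last p = (c, zs)"
    "length p \<le> length (p0 @ [(c, zs)])" "set p \<inter> S \<subseteq> {(c', ys), (c, zs)}"
    using visible_short[OF omv_vis[OF S vS zV] wq] p0 p0ne by auto
  have "length p \<le> length ys - length xs + 2" using p(4) p0(4) lxy by simp
  then have "(c, xs) \<in> set p"
    using block_core[OF p(1) _ _ sp xr] p(2,3) zr unfolding zs_def by auto
  then have "(c, xs) \<in> {(c', ys), (c, zs)}" using p(5) xS by blast
  moreover have "xs \<noteq> ys" using lxy by auto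
  moreover have "xs \<noteq> zs"
  proof (cases "xs = []")
    case True then show ?thesis unfolding zs_def zsel_def by simp
  next
    case False
    then have ln: "length (butlast xs) \<noteq> length xs" by (cases xs) auto
    have zb: "zs = butlast xs" using False unfolding zs_def zsel_def by simp
    show ?thesis
    proof
      assume "xs = zs"
      then have "length xs = length (butlast xs)" using zb by simp
      then show False using ln by linarith
    qed
  qed
  ultimately show False by auto
qed

lemma cross_core:
  assumes w: "walk (GT_V r) (GT_E r) p" and h: "hd p = (c, xs)" and l: "last p = (\<not> c, butlast ys)"
    and xr: "length xs = r - 1" and r2: "2 \<le> r" and py: "prefix ys xs" and ysne: "ys \<noteq> []"
    and len: "length p \<le> r - length ys + 3"
  shows "(\<not> c, ys) \<in> set p"
proof -
  define L where "L = length p - 1"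
  have pne: "p \<noteq> []" using w by (simp add: walk_def)
  have lys: "length ys \<le> r - 1" using py xr prefix_length_le by metis
  have lys1: "length ys \<ge> 1" using ysne by (cases ys) auto
  have p0: "p!0 = (c, xs)" using h walk_hd_nth[OF w] by simp
  have pL: "p!L = (\<not> c, butlast ys)" using l walk_last_nth[OF w] L_def by simp
  have Ll: "L < length p" using pne L_def by simp
  have "\<exists>k<length p. length (snd (p!k)) = r"
  proof (rule ccontr)
    assume nk: "\<not> ?thesis"
    have "\<And>m. 0 \<le> m \<Longrightarrow> m < length p \<Longrightarrow> length (snd (p!m)) < r"
    proof -
      fix m assume "0 \<le> m" "m < length p"
      then have "length (snd (p!m)) \<le> r" using GT_V_len walk_in[OF w] by blast
      moreover have "length (snd (p!m)) \<noteq> r" using nk \<open>m < length p\<close> by blast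
      ultimately show "length (snd (p!m)) < r" by simp
    qed
    then have "fst (p!L) = fst (p!0)" using walk_copy_const[OF w, of 0 L] Ll by blast
    then show False using p0 pL by simp
  qed
  then obtain k where k: "k < length p" "length (snd (p!k)) = r" by blast
  have "k \<noteq> 0"
  proof
    assume "k = 0"
    then have "length xs = r" using k p0 by simp
    then show False using xr r2 by simp
  qed
  then have k1: "k \<ge> 1" by simp
  have kL: "k \<le> L" using k L_def by simp
  have "length (snd (p!k)) \<le> length (snd (p!L)) + (L - k)" using len_lip[OF w kL Ll] by simp
  then have A: "r \<le> length ys - 1 + (L - k)" using k pL by simp
  have B: "L \<le> r - length ys + 2" using len L_def by simp
  have kk: "k = 1" using A B k1 lys lys1 kL by linarith
  have LL: "L = r - length ys + 2" using A B k1 lys lys1 kL kk by linarith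
  have lenL: "length (snd (p!L)) = length ys - 1" using pL by simp
  have eqA: "length (snd (p!1)) = length (snd (p!L)) + (L - 1)"
    using lenL k kk LL lys lys1 by simp
  have asc0: "\<And>i. 1 \<le> i \<Longrightarrow> i \<le> L \<Longrightarrow> snd (p!i) = take (length (snd (p!1)) - (i - 1)) (snd (p!1))"
  proof -
    fix i assume "1 \<le> i" "i \<le> L"
    moreover have "1 \<le> L" using LL lys by simp
    ultimately show "snd (p!i) = take (length (snd (p!1)) - (i - 1)) (snd (p!1))"
      using walk_ascent[OF w _ Ll eqA] by blast
  qed
  have lp1: "length (snd (p!1)) = r" using k kk by simp
  have asc: "\<And>i. 1 \<le> i \<Longrightarrow> i \<le> L \<Longrightarrow> snd (p!i) = take (r - (i - 1)) (snd (p!1))"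
  proof -
    fix i assume a: "1 \<le> i" "i \<le> L"
    show "snd (p!i) = take (r - (i - 1)) (snd (p!1))" using asc0[OF a] by (simp only: lp1)
  qed
  have e01: "GT_E r (p!0) (p!1)" using walk_edge[OF w, of 0] kk k by simp
  have "butlast (snd (p!1)) = xs" using GT_E_step[OF e01] p0 k kk xr r2 by auto
  moreover have "snd (p!1) \<noteq> []" using k kk r2 by auto
  ultimately have "prefix xs (snd (p!1))" by (metis append_butlast_last_id prefixI)
  then have pys: "prefix ys (snd (p!1))" using py prefix_order.trans by blast
  define i0 where "i0 = r - length ys + 1"
  have i0: "1 \<le> i0" "i0 \<le> L" "2 \<le> i0" using LL lys lys1 unfolding i0_def by auto
  have "snd (p!i0) = take (r - (i0 - 1)) (snd (p!1))" using asc[OF i0(1) i0(2)] .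
  also have "r - (i0 - 1) = length ys" unfolding i0_def using lys r2 by simp
  finally have si0: "snd (p!i0) = take (length ys) (snd (p!1))" .
  also have "\<dots> = ys" using pys by (auto simp: prefix_def)
  finally have si0: "snd (p!i0) = ys" .
  have int2: "\<And>m. 2 \<le> m \<Longrightarrow> m < length p \<Longrightarrow> length (snd (p!m)) < r"
  proof -
    fix m assume "2 \<le> m" "m < length p"
    then have "1 \<le> m" "m \<le> L" using L_def by auto
    then have "snd (p!m) = take (r - (m - 1)) (snd (p!1))" by (rule asc)
    then show "length (snd (p!m)) < r" using \<open>2 \<le> m\<close> r2 by simp
  qed
  have i0l: "i0 < length p" using i0 Ll by linarith
  have "2 \<le> L" using i0 by linarith
  have f1: "fst (p!i0) = fst (p!2)" by (rule walk_copy_const[OF w int2 i0(3) i0l])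
  have f2: "fst (p!L) = fst (p!2)" by (rule walk_copy_const[OF w int2 \<open>2 \<le> L\<close> Ll])
  have "fst (p!i0) = (\<not> c)" using f1 f2 pL by simp
  then have "p!i0 = (\<not> c, ys)" using si0 by (simp add: prod_eq_iff)
  then show ?thesis using i0l by (metis nth_mem)
qed


lemma prefix_len_eq: "prefix xs ys \<Longrightarrow> length ys \<le> length xs \<Longrightarrow> xs = ys"
  by (auto simp: prefix_def)

lemma cross_not:
  assumes r2: "2 \<le> r" and S: "omv r S" and xS: "(c, xs) \<in> S" and xr: "length xs = r - 1"
    and yS: "(\<not> c, ys) \<in> S" and py: "prefix ys xs" and ysne: "ys \<noteq> []"
  shows False
proof -
  define z where "z = (\<not> c, butlast ys)"
  define l where "l = (False, xs @ [False])"
  have lys: "length ys \<le> r - 1" using py xr prefix_length_le by metis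
  have lys1: "length ys \<ge> 1" using ysne by (cases ys) auto
  have "length (butlast ys) = length ys - 1" by simp
  then have lb: "length (butlast ys) < r" using lys r2 by linarith
  have zV: "z \<in> GT_V r" using lb unfolding z_def by simp
  have ll: "length (xs @ [False]) = r" using xr r2 by simp
  have lV: "(False, xs @ [False]) \<in> GT_V r" using ll by simp
  have "GT_E r (False, xs @ [False]) (c, butlast (xs @ [False]))"
    by (rule GT_E_up[OF lV]) (use ll in auto)
  then have e: "GT_E r (c, xs) l" unfolding l_def using GT_E_sym by simp
  have j: "length ys - 1 < length (xs @ [False])" using ll lys by simp
  obtain p0 where p0: "walk (GT_V r) (GT_E r) p0" "hd p0 = (False, xs @ [False])"
     "last p0 = (\<not> c, take (length ys - 1) (xs @ [False]))"
     "length p0 = Suc (length (xs @ [False]) - (length ys - 1))"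
    using up_walk[OF lV _ j, of "\<not> c"] ll by blast
  obtain t where t: "xs = ys @ t" using py by (auto simp: prefix_def)
  have "take (length ys - 1) (xs @ [False]) = take (length ys - 1) ys" using t lys1 by simp
  also have "\<dots> = butlast ys" by (simp add: butlast_conv_take)
  finally have lp0: "last p0 = z" using p0(3) z_def by simp
  have p0ne: "p0 \<noteq> []" using p0(1) by (simp add: walk_def)
  have xV: "(c, xs) \<in> GT_V r" using xr r2 by simp
  have wq: "walk (GT_V r) (GT_E r) ((c, xs) # p0)"
    using walk_Cons2[OF p0ne] p0 e xV l_def by simp
  have lq: "length ((c, xs) # p0) = r - length ys + 3" using p0(4) ll lys lys1 by simp
  obtain p where p: "walk (GT_V r) (GT_E r) p" "hd p = (c, xs)" "last p = z"
    "length p \<le> length ((c, xs) # p0)" "set p \<inter> S \<subseteq> {(c, xs), z}"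
    using visible_short[OF omv_vis[OF S xS zV] wq] lp0 p0ne by auto
  have "(\<not> c, ys) \<in> set p"
    using cross_core[OF p(1) p(2) _ xr r2 py ysne] p(3,4) lq unfolding z_def by simp
  then have "(\<not> c, ys) \<in> {(c, xs), z}" using p(5) yS by blast
  moreover have "ys \<noteq> butlast ys"
  proof
    assume "ys = butlast ys"
    then have "length ys = length (butlast ys)" by simp
    then show False using lys1 by simp
  qed
  ultimately show False unfolding z_def by auto
qed

definition Lf :: "nat \<Rightarrow> (bool \<times> bool list) set" where
  "Lf r = {v \<in> GT_V r. length (snd v) = r}"

lemma vis_intro:
  assumes "walk V E p" "hd p = u" "last p = v" "length p = Suc m"
    "\<And>q. walk V E q \<Longrightarrow> hd q = u \<Longrightarrow> last q = v \<Longrightarrow> Suc m \<le> length q"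
    "set p \<inter> S \<subseteq> {u, v}"
  shows "S_visible V E S u v"
proof -
  have "dist V E u v = m" using dist_eq[OF assms(1-5)] .
  then show ?thesis unfolding S_visible_def shortest_path_def using assms by auto
qed

lemma leaf_vis:
  assumes uL: "u \<in> Lf r" and vV: "v \<in> GT_V r"
  shows "S_visible (GT_V r) (GT_E r) (Lf r) u v"
proof -
  obtain us where u: "u = (False, us)" and lus: "length us = r"
    using uL unfolding Lf_def by (cases u) auto
  obtain c vs where v: "v = (c, vs)" by (cases v)
  have lvs: "length vs \<le> r" using vV v by auto
  have uV: "(False, us) \<in> GT_V r" using lus by simp
  show ?thesis
  proof (cases "v = u")
    case True
    show ?thesis
    proof (rule vis_intro[of _ _ "[u]" _ _ 0])
      show "walk (GT_V r) (GT_E r) [u]" using uV u by simp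
      fix q assume "walk (GT_V r) (GT_E r) q"
      then show "Suc 0 \<le> length q" by (cases q) (auto simp: walk_def)
    qed (use True in auto)
  next
    case vu: False
    show ?thesis
    proof (cases "prefix vs us")
      case True
      have "length vs \<noteq> r"
      proof
        assume "length vs = r"
        then have "vs = us" using True lus prefix_len_eq by (metis order_refl)
        then show False using vu u v vV \<open>length vs = r\<close> by auto
      qed
      then have lt: "length vs < length us" using lvs lus by simp
      have tk: "take (length vs) us = vs" using True by (auto simp: prefix_def)
      obtain p where p: "walk (GT_V r) (GT_E r) p" "hd p = (False, us)" "last p = (c, take (length vs) us)"
        "length p = Suc (length us - length vs)" "\<forall>x\<in>set (tl p). fst x = c \<and> length (snd x) < length us"
        using up_walk[OF uV _ lt, of c] lus by blast
      show ?thesis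
      proof (rule vis_intro[OF p(1)])
        show "hd p = u" using p u by simp
        show "last p = v" using p tk v by simp
        fix q assume q: "walk (GT_V r) (GT_E r) q" "hd q = u" "last q = v"
        have qne: "q \<noteq> []" using q by (simp add: walk_def)
        have "length (snd (q!0)) \<le> length (snd (q!(length q - 1))) + (length q - 1 - 0)"
          using len_lip[OF q(1), of 0 "length q - 1"] qne by simp
        then have "r \<le> length vs + (length q - 1)"
          using q walk_hd_nth[OF q(1)] walk_last_nth[OF q(1)] u v lus by simp
        moreover have "0 < length q" using qne by simp
        ultimately show "Suc (length us - length vs) \<le> length q" using lus by linarith
      next
        have pne: "p \<noteq> []" using p(1) by (simp add: walk_def)
        have "set p = insert (hd p) (set (tl p))" using pne by (cases p) auto
        then show "set p \<inter> Lf r \<subseteq> {u, v}" using p(2,5) u lus unfolding Lf_def by auto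
      qed (use p in simp)
    next
      case npre: False
      define a where "a = longest_common_prefix us vs"
      have pau: "prefix a us" unfolding a_def by (rule longest_common_prefix_prefix1)
      have pav: "prefix a vs" unfolding a_def by (rule longest_common_prefix_prefix2)
      have lav: "length a < length vs"
      proof (rule ccontr)
        assume "\<not> ?thesis"
        then have "a = vs" using pav prefix_len_eq by (metis not_less)
        then show False using pau npre by simp
      qed
      have lau: "length a < length us"
      proof (rule ccontr)
        assume "\<not> ?thesis"
        then have "a = us" using pau prefix_len_eq by (metis not_less)
        then have "prefix us vs" using pav by simp
        then have "vs = us" using lus lvs prefix_len_eq by (metis prefix_length_le le_antisym)
        then show False using npre by simp
      qed
      define w where "w = take (Suc (length a)) us"
      have pw: "prefix w us" unfolding w_def by (rule take_is_prefix)
      have lw: "length w = Suc (length a)" unfolding w_def using lau by simp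
      have npw: "\<not> prefix w vs"
      proof
        assume "prefix w vs"
        then have "prefix w a" unfolding a_def using pw longest_common_prefix_max_prefix by blast
        then show False using lw prefix_length_le by fastforce
      qed
      have bw: "butlast w = a" unfolding w_def using pau lau
        by (auto simp: butlast_take prefix_def)
      have tu: "take (length a) us = a" using pau by (auto simp: prefix_def)
      have tv: "take (length a) vs = a" using pav by (auto simp: prefix_def)
      obtain p1 where p1: "walk (GT_V r) (GT_E r) p1" "hd p1 = (False, us)" "last p1 = (c, take (length a) us)"
        "length p1 = Suc (length us - length a)" "\<forall>x\<in>set (tl p1). fst x = c \<and> length (snd x) < length us"
        using up_walk[OF uV _ lau, of c] lus by blast
      have vV': "(c, vs) \<in> GT_V r" using vV v by simp
      obtain p2 where p2: "walk (GT_V r) (GT_E r) p2" "hd p2 = (c, vs)" "last p2 = (c, take (length a) vs)"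
        "length p2 = Suc (length vs - length a)" "\<forall>x\<in>set (tl p2). fst x = c \<and> length (snd x) < length vs"
        using up_walk[OF vV' _ lav, of c] by blast
      define t where "t = tl (rev p2)"
      have p1ne: "p1 \<noteq> []" using p1(1) by (simp add: walk_def)
      have p2ne: "p2 \<noteq> []" using p2(1) by (simp add: walk_def)
      have hr: "hd (rev p2) = (c, a)" using p2(3) tv by (simp add: hd_rev)
      have rne: "rev p2 \<noteq> []" using p2ne by simp
      have rp2: "rev p2 = (c, a) # t" unfolding t_def using hr rne by (metis list.collapse)
      have lent: "length t = length vs - length a" unfolding t_def using p2(4) by simp
      have tne: "t \<noteq> []" using lent lav by auto
      have wr: "walk (GT_V r) (GT_E r) (rev p2)" using walk_rev[OF _ p2(1)] GT_E_sym by blast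
      then have wt: "walk (GT_V r) (GT_E r) t" and et: "GT_E r (c, a) (hd t)"
        using walk_Cons2[OF tne] rp2 by auto
      have wp: "walk (GT_V r) (GT_E r) (p1 @ t)"
        using walk_append[OF p1ne tne] p1 wt et tu by simp
      have lt: "last t = v"
      proof -
        have "last (rev p2) = v" using p2(2) v by (simp add: last_rev)
        then show ?thesis using rp2 tne by (metis last_ConsR)
      qed
      show ?thesis
      proof (rule vis_intro[OF wp])
        show "hd (p1 @ t) = u" using p1ne p1(2) u by simp
        show "last (p1 @ t) = v" using tne lt by simp
        show "length (p1 @ t) = Suc (length us - length a + (length vs - length a))"
          using p1(4) lent by simp
        fix q assume q: "walk (GT_V r) (GT_E r) q" "hd q = u" "last q = v"
        have qne: "q \<noteq> []" using q by (simp add: walk_def)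
        have q0: "snd (q!0) = us" using q(2) walk_hd_nth[OF q(1)] u by simp
        have qL: "snd (q!(length q - 1)) = vs" using q(3) walk_last_nth[OF q(1)] v by simp
        obtain k where k: "Suc k < length q" "snd (q!k) = w" "snd (q!Suc k) = butlast w"
          using walk_exit[OF q(1), of w] pw npw q0 qL by auto
        have "length (snd (q!0)) \<le> length (snd (q!k)) + (k - 0)"
          using len_lip[OF q(1), of 0 k] k by simp
        then have A: "length us \<le> Suc (length a) + k" using q0 k lw by simp
        have "length (snd (q!(length q - 1))) \<le> length (snd (q!Suc k)) + (length q - 1 - Suc k)"
          using len_lip[OF q(1), of "Suc k" "length q - 1"] k by simp
        then have B: "length vs \<le> length a + (length q - 1 - Suc k)" using qL k bw by simp
        show "Suc (length us - length a + (length vs - length a)) \<le> length q"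
          using A B k(1) by linarith
      next
        have s1: "set p1 = insert (hd p1) (set (tl p1))" using p1ne by (cases p1) auto
        have "set t \<subseteq> set p2" using rp2 by (metis set_rev set_subset_Cons)
        moreover have "set p2 = insert (hd p2) (set (tl p2))" using p2ne by (cases p2) auto
        ultimately have s2: "set t \<subseteq> insert v (set (tl p2))" using p2(2) v by simp
        show "set (p1 @ t) \<inter> Lf r \<subseteq> {u, v}"
        proof
          fix x assume x: "x \<in> set (p1 @ t) \<inter> Lf r"
          then have lx: "length (snd x) = r" unfolding Lf_def by simp
          have "x \<in> insert u (set (tl p1)) \<or> x \<in> insert v (set (tl p2))"
            using x s1 s2 p1(2) u by auto
          moreover have "x \<notin> set (tl p1)" using p1(5) lx lus by auto
          moreover have "x \<notin> set (tl p2)" using p2(5) lx lvs by fastforce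
          ultimately show "x \<in> {u, v}" by auto
        qed
      qed
    qed
  qed
qed


lemma fin_V: "finite (GT_V r)"
proof -
  have "GT_V r \<subseteq> (UNIV :: bool set) \<times> {xs. set xs \<subseteq> (UNIV :: bool set) \<and> length xs \<le> r}"
    by (auto simp: GT_V_def)
  moreover have "finite ((UNIV :: bool set) \<times> {xs. set xs \<subseteq> (UNIV :: bool set) \<and> length xs \<le> r})"
    using finite_lists_length_le[of "UNIV :: bool set" r] by simp
  ultimately show ?thesis using finite_subset by blast
qed

lemma Lf_card: "card (Lf r) = 2 ^ r"
proof -
  have "Lf r = (\<lambda>xs. (False, xs)) ` {xs. set xs \<subseteq> (UNIV :: bool set) \<and> length xs = r}"
    unfolding Lf_def by (auto simp: GT_V_def image_iff)
  moreover have "inj (\<lambda>xs::bool list. (False, xs))" by (auto simp: inj_def)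
  ultimately have "card (Lf r) = card {xs. set xs \<subseteq> (UNIV :: bool set) \<and> length xs = r}"
    by (simp add: card_image inj_on_def)
  also have "\<dots> = 2 ^ r" using card_lists_length_eq[of "UNIV :: bool set" r] by simp
  finally show ?thesis .
qed

lemma Lf_sub: "Lf r \<subseteq> GT_V r" unfolding Lf_def by auto

lemma Lf_omv: "omv r (Lf r)"
  unfolding outer_mutual_visibility_set_def mutual_visibility_set_def
  using Lf_sub leaf_vis by blast

definition fmap :: "nat \<Rightarrow> bool \<times> bool list \<Rightarrow> bool \<times> bool list" where
  "fmap r v = (False, snd v @ replicate (r - length (snd v)) (fst v))"

lemma fmap_in: "v \<in> GT_V r \<Longrightarrow> fmap r v \<in> Lf r"
  unfolding fmap_def Lf_def using GT_V_len[of v r] by auto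

lemma inj_aux:
  assumes r2: "2 \<le> r" and S: "omv r S" and v1: "(c1, xs1) \<in> S" and v2: "(c2, xs2) \<in> S"
    and le: "length xs1 \<le> length xs2"
    and eq: "xs1 @ replicate (r - length xs1) c1 = xs2 @ replicate (r - length xs2) c2"
  shows "(c1, xs1) = (c2, xs2)"
proof -
  have V1: "(c1, xs1) \<in> GT_V r" and V2: "(c2, xs2) \<in> GT_V r" using omv_sub[OF S] v1 v2 by auto
  then have l1: "length xs1 \<le> r" and l2: "length xs2 \<le> r" by auto
  show ?thesis
  proof (cases "length xs1 = length xs2")
    case True
    then have x: "xs1 = xs2" and rr: "replicate (r - length xs1) c1 = replicate (r - length xs2) c2"
      using eq by auto
    show ?thesis
    proof (cases "length xs1 = r")
      case True
      then show ?thesis using x V1 V2 by auto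
    next
      case False
      then have "r - length xs1 \<noteq> 0" using l1 by simp
      then have "c1 = c2" using rr x by (simp add: replicate_eq_replicate)
      then show ?thesis using x by simp
    qed
  next
    case False
    then have lt: "length xs1 < length xs2" using le by simp
    have "take (length xs2) (xs1 @ replicate (r - length xs1) c1) = xs2"
      using eq by simp
    moreover have "length xs2 - length xs1 \<le> r - length xs1" using l2 by simp
    ultimately have x2: "xs2 = xs1 @ replicate (length xs2 - length xs1) c1"
      using lt by (simp add: min_def)
    then have "prefix xs1 xs2" by (metis prefixI)
    then have sp: "strict_prefix xs1 xs2" using lt by (auto simp: strict_prefix_def)
    have lr1: "length xs1 < r" using lt l2 by simp
    show ?thesis
    proof (cases "length xs2 = r")
      case True
      then have "(c2, xs2) \<notin> S" using below_not_in[OF r2 S v1 lr1 V2 sp] by simp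
      then show ?thesis using v2 by simp
    next
      case False
      then have lr2: "length xs2 < r" using l2 by simp
      have "(xs1 @ replicate (r - length xs1) c1) ! length xs2 = c1"
        using lt lr2 by (simp add: nth_append)
      moreover have "(xs2 @ replicate (r - length xs2) c2) ! length xs2 = c2"
        using lr2 by (simp add: nth_append)
      ultimately have "c1 = c2" using eq by simp
      then have "(c2, xs2) \<notin> S" using below_not_in[OF r2 S v1 lr1 V2 sp] by simp
      then show ?thesis using v2 by simp
    qed
  qed
qed

lemma fmap_inj:
  assumes r2: "2 \<le> r" and S: "omv r S"
  shows "inj_on (fmap r) S"
proof (rule inj_onI)
  fix x y assume x: "x \<in> S" and y: "y \<in> S" and e: "fmap r x = fmap r y"
  obtain c1 xs1 where x1: "x = (c1, xs1)" by (cases x)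
  obtain c2 xs2 where y1: "y = (c2, xs2)" by (cases y)
  have eq: "xs1 @ replicate (r - length xs1) c1 = xs2 @ replicate (r - length xs2) c2"
    using e x1 y1 unfolding fmap_def by simp
  show "x = y"
  proof (cases "length xs1 \<le> length xs2")
    case True
    then show ?thesis using inj_aux[OF r2 S _ _ True eq] x y x1 y1 by simp
  next
    case False
    then show ?thesis using inj_aux[OF r2 S _ _ _ eq[symmetric]] x y x1 y1 by simp
  qed
qed

lemma card_le:
  assumes r2: "2 \<le> r" and S: "omv r S"
  shows "card S \<le> 2 ^ r"
proof -
  have "fmap r ` S \<subseteq> Lf r" using fmap_in omv_sub[OF S] by blast
  then have "card S \<le> card (Lf r)"
    using card_inj_on_le[OF fmap_inj[OF r2 S]] finite_subset[OF Lf_sub fin_V] by blast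
  then show ?thesis using Lf_card by simp
qed


lemma hit:
  assumes r2: "2 \<le> r" and S: "omv r S" and img: "fmap r ` S = Lf r"
    and xS: "(c, xs) \<in> S" and xr: "length xs < r" and lls: "length ls = r" and pl: "prefix xs ls"
  obtains c2 ys where "(c2, ys) \<in> S" "length ys < r" "ls = ys @ replicate (r - length ys) c2"
proof -
  have "(False, ls) \<in> Lf r" using lls unfolding Lf_def by simp
  then obtain y where yS: "y \<in> S" and fy: "fmap r y = (False, ls)" using img by force
  obtain c2 ys where y: "y = (c2, ys)" by (cases y)
  have eq: "ls = ys @ replicate (r - length ys) c2" using fy y unfolding fmap_def by simp
  have yV: "(c2, ys) \<in> GT_V r" using omv_sub[OF S] yS y by auto
  have "length ys \<noteq> r"
  proof
    assume lr: "length ys = r"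
    then have "c2 = False" "ys = ls" using yV eq by auto
    moreover have "strict_prefix xs ls" using pl xr lls by (auto simp: strict_prefix_def)
    ultimately have "(c2, ys) \<notin> S" using below_not_in[OF r2 S xS xr yV] lr by simp
    then show False using yS y by simp
  qed
  then have "length ys < r" using yV by auto
  then show ?thesis using that yS y eq by blast
qed

lemma nth_rep_tail:
  assumes "ls = ys @ replicate (r - length ys) c2" "length ys \<le> i" "i < r"
  shows "ls ! i = c2"
  using assms by (simp add: nth_append)

lemma eq_case:
  assumes r2: "2 \<le> r" and S: "omv r S" and cS: "card S = 2 ^ r"
  shows "S = Lf r"
proof -
  have finS: "finite S" using omv_sub[OF S] fin_V finite_subset by blast
  have finL: "finite (Lf r)" using finite_subset[OF Lf_sub fin_V] .
  have sub: "fmap r ` S \<subseteq> Lf r" using fmap_in omv_sub[OF S] by blast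
  have "card (fmap r ` S) = card (Lf r)"
    using card_image[OF fmap_inj[OF r2 S]] cS Lf_card by simp
  then have img: "fmap r ` S = Lf r" using card_subset_eq[OF finL sub] by simp
  have allr: "\<forall>v\<in>S. length (snd v) = r"
  proof (rule ccontr)
    assume "\<not> ?thesis"
    then obtain v0 where v0: "v0 \<in> S" "length (snd v0) \<noteq> r" by blast
    have "v0 \<in> GT_V r" using omv_sub[OF S] v0(1) by blast
    then have "length (snd v0) \<le> r" by (rule GT_V_len)
    then have lv0: "length (snd v0) < r" using v0(2) by simp
    define P where "P n = (\<exists>c xs. (c, xs) \<in> S \<and> length xs < r \<and> length xs = n)" for n
    obtain c0 xs0 where v0e: "v0 = (c0, xs0)" by (cases v0)
    have "P (length (snd v0))" unfolding P_def v0e using v0(1) lv0 v0e by auto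
    moreover have "\<forall>n. P n \<longrightarrow> n \<le> r" unfolding P_def by auto
    ultimately obtain n0 where n0: "P n0" "\<forall>n. P n \<longrightarrow> n \<le> n0"
      using Nat.ex_has_greatest_nat[of P "length (snd v0)" r] by blast
    then obtain c xs where xS: "(c, xs) \<in> S" and xr: "length xs < r" and xn: "length xs = n0"
      unfolding P_def by blast
    have mx: "\<And>c' ys. (c', ys) \<in> S \<Longrightarrow> length ys < r \<Longrightarrow> length ys \<le> length xs"
    proof -
      fix c' ys assume "(c', ys) \<in> S" "length ys < r"
      then have "P (length ys)" unfolding P_def by blast
      then show "length ys \<le> length xs" using n0(2) xn by blast
    qed
    show False
    proof (cases "length xs < r - 1")
      case True
      define ls where "ls = xs @ [\<not> c] @ replicate (r - length xs - 1) c"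
      have lls: "length ls = r" unfolding ls_def using True by simp
      have pl: "prefix xs ls" unfolding ls_def by simp
      obtain c2 ys where y: "(c2, ys) \<in> S" "length ys < r" "ls = ys @ replicate (r - length ys) c2"
        using hit[OF r2 S img xS xr lls pl] by blast
      have lyx: "length ys \<le> length xs" using mx y by blast
      have "ls ! length xs = c2" using nth_rep_tail[OF y(3)] lyx xr by simp
      moreover have "ls ! length xs = (\<not> c)" unfolding ls_def by simp
      moreover have "ls ! (r - 1) = c2" using nth_rep_tail[OF y(3)] lyx True by simp
      moreover have "ls ! (r - 1) = c" unfolding ls_def using True by (simp add: nth_append)
      ultimately show False by simp
    next
      case False
      then have xr1: "length xs = r - 1" using xr by simp
      define ls where "ls = xs @ [\<not> c]"
      have lls: "length ls = r" unfolding ls_def using xr1 r2 by simp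
      have pl: "prefix xs ls" unfolding ls_def by simp
      obtain c2 ys where y: "(c2, ys) \<in> S" "length ys < r" "ls = ys @ replicate (r - length ys) c2"
        using hit[OF r2 S img xS xr lls pl] by blast
      have lyx: "length ys \<le> length xs" using mx y by blast
      have "ls ! length xs = c2" using nth_rep_tail[OF y(3)] lyx xr by simp
      moreover have "ls ! length xs = (\<not> c)" unfolding ls_def by simp
      ultimately have c2: "c2 = (\<not> c)" by simp
      have "take (length ys) ls = ys" using y(3) by simp
      moreover have "take (length ys) ls = take (length ys) xs" unfolding ls_def using lyx by simp
      ultimately have pyx: "prefix ys xs" by (metis take_is_prefix)
      show False
      proof (cases "ys = []")
        case False
        show False using cross_not[OF r2 S xS xr1 _ pyx False] y(1) c2 by simp
      next
        case True
        then have rS: "(\<not> c, []) \<in> S" using y(1) c2 by simp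
        define m where "m = replicate (r - 1) c @ [\<not> c]"
        have lm: "length m = r" unfolding m_def using r2 by simp
        have r0: "length ([] :: bool list) < r" using r2 by simp
        obtain c3 ys3 where y3: "(c3, ys3) \<in> S" "length ys3 < r" "m = ys3 @ replicate (r - length ys3) c3"
          using hit[OF r2 S img rS r0 lm] by auto
        have "m ! (r - 1) = c3" using nth_rep_tail[OF y3(3)] y3(2) r2 by simp
        moreover have "m ! (r - 1) = (\<not> c)" unfolding m_def by (simp add: nth_append)
        ultimately have c3: "c3 = (\<not> c)" by simp
        show False
        proof (cases "ys3 = []")
          case False
          have V3: "(c3, ys3) \<in> GT_V r" using y3(2) by simp
          have "strict_prefix [] ys3" using False by (simp add: strict_prefix_def)
          then have "(c3, ys3) \<notin> S" using below_not_in[OF r2 S rS r0 V3] c3 by simp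
          then show False using y3(1) by simp
        next
          case True
          have "m ! 0 = c3" using nth_rep_tail[OF y3(3)] True r2 by simp
          moreover have "m ! 0 = c" unfolding m_def using r2 by (simp add: nth_append)
          ultimately show False using c3 by simp
        qed
      qed
    qed
  qed
  have "S \<subseteq> Lf r" using allr omv_sub[OF S] unfolding Lf_def by auto
  moreover have "card S = card (Lf r)" using cS Lf_card by simp
  ultimately show ?thesis using card_subset_eq[OF finL] by blast
qed

theorem mainTheorem4:
  fixes r :: nat
  assumes "r \<ge> 2"
  shows "outer_mv_number (GT_V r) (GT_E r) = 2 ^ r \<and> (\<exists>!S. mu_o_set (GT_V r) (GT_E r) S)"
proof -
  have r2: "2 \<le> r" using assms by simp
  have fin: "finite {S. omv r S}"
    using omv_sub fin_V by (metis (mono_tags, lifting) Collect_mono Pow_def finite_Pow_iff finite_subset)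
  have num: "outer_mv_number (GT_V r) (GT_E r) = 2 ^ r"
    unfolding outer_mv_number_def
  proof (rule Max_eqI)
    show "finite (card ` {S. omv r S})" using fin by simp
    show "\<And>y. y \<in> card ` {S. omv r S} \<Longrightarrow> y \<le> 2 ^ r" using card_le[OF r2] by auto
    show "2 ^ r \<in> card ` {S. omv r S}" using Lf_omv Lf_card by (metis image_eqI mem_Collect_eq)
  qed
  have "mu_o_set (GT_V r) (GT_E r) (Lf r)"
    unfolding mu_o_set_def num using Lf_omv Lf_card by simp
  moreover have "\<And>S. mu_o_set (GT_V r) (GT_E r) S \<Longrightarrow> S = Lf r"
    unfolding mu_o_set_def num using eq_case[OF r2] by blast
  ultimately show ?thesis using num by blast
qed

end
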